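(* Let $T$ be a primed tableau, $1\le i\le k-1$, $j=i+1$, and suppose the $i$–$j$ reading subword of $T$ has an unbracketed $i$; let $x,E_x,S_x$ be as in the definition of $f_i$. (a) If $c(E_x)=j'$ (case F2, so $q=E_x$), then $c(S_q)>j$, where $S_q$ is the position directly below $q$. (b) If $c(E_x)\ge j$ and $c(S_x)\in\{j',j\}$ (case F3), then for every box of the ribbon defined in F3 that contains $j$, the box diagonally above and to the left of it contains $i$; and the Southwest-most box $q$ of this ribbon satisfies $c(q)=j'$.
   Context: Primed tableaux: Fix $k$. $X'_k=\{1'<1<2'<2<\dots<k'<k\}$; moving one step up in this chain is "increasing by a half unit" (e.g. $i'\to i$, $i\to (i+1)'$). A primed tableau of (skew) shape $\lambda/\mu$ is a filling of the diagram (English convention; "below" = next row down) with letters of $X'_k$, rows and columns weakly increasing, at most one $i'$ per row and at most one $i$ per column, for every $i$. For a position $p$, $c(p)$ is its entry, with $c(p)=\infty$ if $p$ is not a box of $T$. The reading word of $T$ is the word of its unprimed entries, read row by row left to right, from the bottom row to the top row. Bracketing: fix $i$, $j=i+1$. In the subword of the reading word consisting of the letters $i$ and $j$, repeatedly pair (bracket) a letter $j$ with a letter $i$ occurring later such that no unbracketed letters lie between them, until the unbracketed letters form a word $i^aj^b$. Operator $f_i$: if there is no unbracketed $i$, $f_i(T)=0$. Otherwise let $x$ be the box of $T$ corresponding to the rightmost unbracketed $i$; $E_x$ the position immediately right of $x$, $S_x$ the position immediately below $x$. Choose a box $q$: (F1) if $c(E_x)\ge j$ and $c(S_x)>j$,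 $q=x$; (F2) if $c(E_x)=j'$, $q=E_x$; (F3) if $c(E_x)\ge j$ and $c(S_x)\in\{j',j\}$, take the maximal ribbon (connected skew strip) starting at $S_x$ and extending by steps South and/or West consisting only of boxes with entries $j$ or $j'$, and let $q$ be its Southwest-most box. Then $f_i(T)$ is obtained from $T$ by increasing $c(x)$ by a half unit and then increasing $c(q)$ by a half unit (so if $q=x$ the entry of $x$ increases by a full unit). *)

theory Defs
  imports Main "HOL-Library.Extended_Nat"
begin

text \<open>The chain 1' < 1 < 2' < 2 < ... < k' < k is encoded by 1 < 2 < 3 < 4 < ... < 2k-1 < 2k:
  the primed letter i' is 2i-1, the unprimed letter i is 2i.  Increasing by a half unit
  is adding 1.  Odd values are primed letters, even values unprimed letters.\<close>

definition primed :: "nat \<Rightarrow> nat" where "primed i = 2 * i - 1"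
definition unprimed :: "nat \<Rightarrow> nat" where "unprimed i = 2 * i"

text \<open>A partition is a weakly decreasing list of naturals.  Positions are (row, column) pairs
  of integers, rows numbered top to bottom from 0 (English convention), columns left to right
  from 0.\<close>

definition is_partition :: "nat list \<Rightarrow> bool" where
  "is_partition lam = sorted_wrt (\<ge>) lam"

definition part :: "nat list \<Rightarrow> nat \<Rightarrow> nat" where
  "part mu r = (if r < length mu then mu ! r else 0)"

definition skew_shape :: "nat list \<Rightarrow> nat list \<Rightarrow> bool" where
  "skew_shape lam mu \<longleftrightarrow> is_partition lam \<and> is_partition mu \<and> length mu \<le> length lam
     \<and> (\<forall>r < length mu. mu ! r \<le> lam ! r)"

definition boxes :: "nat list \<Rightarrow> nat list \<Rightarrow> (int \<times> int) set" where
  "boxes lam mu = {(r, c). 0 \<le> r \<and> nat r < length lam \<and> int (part mu (nat r)) \<le> c \<and> c < int (lam ! nat r)}"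

definition east :: "int \<times> int \<Rightarrow> int \<times> int" where "east p = (fst p, snd p + 1)"
definition west :: "int \<times> int \<Rightarrow> int \<times> int" where "west p = (fst p, snd p - 1)"
definition south :: "int \<times> int \<Rightarrow> int \<times> int" where "south p = (fst p + 1, snd p)"
definition northwest :: "int \<times> int \<Rightarrow> int \<times> int" where "northwest p = (fst p - 1, snd p - 1)"

definition entry :: "nat list \<Rightarrow> nat list \<Rightarrow> (int \<times> int \<Rightarrow> nat) \<Rightarrow> int \<times> int \<Rightarrow> enat" where
  "entry lam mu T p = (if p \<in> boxes lam mu then enat (T p) else \<infinity>)"

definition primed_tableau :: "nat \<Rightarrow> nat list \<Rightarrow> nat list \<Rightarrow> (int \<times> int \<Rightarrow> nat) \<Rightarrow> bool" where
  "primed_tableau k lam mu T \<longleftrightarrow>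
     skew_shape lam mu
   \<and> (\<forall>p \<in> boxes lam mu. 1 \<le> T p \<and> T p \<le> 2 * k)
   \<and> (\<forall>r c c'. (r, c) \<in> boxes lam mu \<longrightarrow> (r, c') \<in> boxes lam mu \<longrightarrow> c \<le> c' \<longrightarrow> T (r, c) \<le> T (r, c'))
   \<and> (\<forall>r r' c. (r, c) \<in> boxes lam mu \<longrightarrow> (r', c) \<in> boxes lam mu \<longrightarrow> r \<le> r' \<longrightarrow> T (r, c) \<le> T (r', c))
   \<and> (\<forall>r c c'. (r, c) \<in> boxes lam mu \<longrightarrow> (r, c') \<in> boxes lam mu \<longrightarrow> odd (T (r, c)) \<longrightarrow> T (r, c) = T (r, c') \<longrightarrow> c = c')
   \<and> (\<forall>r r' c. (r, c) \<in> boxes lam mu \<longrightarrow> (r', c) \<in> boxes lam mu \<longrightarrow> even (T (r, c)) \<longrightarrow> T (r, c) = T (r', c) \<longrightarrow> r = r')"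

definition reading_word :: "nat list \<Rightarrow> nat list \<Rightarrow> (int \<times> int \<Rightarrow> nat) \<Rightarrow> (nat \<times> (int \<times> int)) list" where
  "reading_word lam mu T =
     concat (map (\<lambda>r. map (\<lambda>c. (T (int r, int c), (int r, int c)))
                        (filter (\<lambda>c. even (T (int r, int c))) [part mu r..<lam ! r]))
             (rev [0..<length lam]))"

definition ij_subword :: "nat \<Rightarrow> nat list \<Rightarrow> nat list \<Rightarrow> (int \<times> int \<Rightarrow> nat) \<Rightarrow> (nat \<times> (int \<times> int)) list" where
  "ij_subword i lam mu T = filter (\<lambda>(v, _). v = unprimed i \<or> v = unprimed (i + 1)) (reading_word lam mu T)"

definition unbr :: "(nat \<times> nat) set \<Rightarrow> nat \<Rightarrow> bool" where
  "unbr B m \<longleftrightarrow> m \<notin> fst ` B \<and> m \<notin> snd ` B"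

text \<open>The bracketing procedure: repeatedly pair a letter b (= j) with a later letter a (= i)
  when both are unbracketed and no unbracketed letters lie between them.  Pairs are
  (index of j, index of i).\<close>
inductive bracketing :: "nat \<Rightarrow> nat \<Rightarrow> nat list \<Rightarrow> (nat \<times> nat) set \<Rightarrow> bool"
  for a b :: nat and w :: "nat list" where
  empty: "bracketing a b w {}"
| step: "\<lbrakk> bracketing a b w B; p < q; q < length w; w ! p = b; w ! q = a;
           unbr B p; unbr B q; \<forall>m. p < m \<and> m < q \<longrightarrow> \<not> unbr B m \<rbrakk>
         \<Longrightarrow> bracketing a b w (insert (p, q) B)"

text \<open>The procedure has terminated: the unbracketed letters form a word a^s b^t.\<close>
definition bracketing_complete :: "nat \<Rightarrow> nat \<Rightarrow> nat list \<Rightarrow> (nat \<times> nat) set \<Rightarrow> bool" where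
  "bracketing_complete a b w B \<longleftrightarrow>
     (\<forall>m n. m < n \<longrightarrow> n < length w \<longrightarrow> unbr B m \<longrightarrow> unbr B n \<longrightarrow> \<not> (w ! m = b \<and> w ! n = a))"

text \<open>A maximal ribbon starting at s, extending by steps South and/or West, consisting only of
  boxes with entries j or j' (given as a list of boxes from s to its Southwest-most box).\<close>
definition max_ribbon :: "nat list \<Rightarrow> nat list \<Rightarrow> (int \<times> int \<Rightarrow> nat) \<Rightarrow> nat \<Rightarrow> int \<times> int \<Rightarrow> (int \<times> int) list \<Rightarrow> bool" where
  "max_ribbon lam mu T j s ps \<longleftrightarrow>
     ps \<noteq> [] \<and> hd ps = s
   \<and> (\<forall>m. Suc m < length ps \<longrightarrow> ps ! Suc m \<in> {south (ps ! m), west (ps ! m)})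
   \<and> (\<forall>p \<in> set ps. entry lam mu T p \<in> {enat (primed j), enat (unprimed j)})
   \<and> entry lam mu T (south (last ps)) \<notin> {enat (primed j), enat (unprimed j)}
   \<and> entry lam mu T (west (last ps)) \<notin> {enat (primed j), enat (unprimed j)}"

end

theory Submission
  imports Defs
begin


definition rdlt :: "int \<times> int \<Rightarrow> int \<times> int \<Rightarrow> bool" where
  "rdlt p q \<longleftrightarrow> fst p > fst q \<or> (fst p = fst q \<and> snd p < snd q)"

lemma rdlt_trans: "rdlt p q \<Longrightarrow> rdlt q s \<Longrightarrow> rdlt p s" by (auto simp: rdlt_def)
lemma rdlt_irrefl: "\<not> rdlt p p" by (auto simp: rdlt_def)
lemma rdlt_asym: "rdlt p q \<Longrightarrow> \<not> rdlt q p" by (auto simp: rdlt_def)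
lemma rdlt_total: "p \<noteq> q \<Longrightarrow> rdlt p q \<or> rdlt q p" by (auto simp: rdlt_def prod_eq_iff)

lemma finite_boxes: "finite (boxes lam mu)"
proof -
  have "boxes lam mu \<subseteq> {0..int (length lam)} \<times> {0..int (sum_list lam)}"
  proof
    fix q assume q: "q \<in> boxes lam mu"
    obtain a b where qe: "q = (a,b)" by (cases q)
    have "lam ! nat a \<le> sum_list lam" using q qe by (intro elem_le_sum_list) (auto simp: boxes_def)
    then show "q \<in> {0..int (length lam)} \<times> {0..int (sum_list lam)}" using q qe by (auto simp: boxes_def)
  qed
  then show ?thesis by (rule finite_subset) auto
qed

lemma set_reading_word:
  "set (reading_word lam mu T) = {(T q, q) | q. q \<in> boxes lam mu \<and> even (T q)}"
proof (intro set_eqI iffI)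
  fix e assume "e \<in> set (reading_word lam mu T)"
  then show "e \<in> {(T q, q) | q. q \<in> boxes lam mu \<and> even (T q)}"
    by (auto simp: reading_word_def boxes_def)
next
  fix e assume "e \<in> {(T q, q) | q. q \<in> boxes lam mu \<and> even (T q)}"
  then obtain a b where e: "e = (T (a,b), (a,b))" "(a,b) \<in> boxes lam mu" "even (T (a,b))" by auto
  have a0: "a \<ge> 0" and b0: "b \<ge> 0" using e(2) by (auto simp: boxes_def)
  have "nat b \<in> set (filter (\<lambda>c. even (T (int (nat a), int c))) [part mu (nat a)..<lam ! nat a])"
    using e a0 b0 by (auto simp: boxes_def)
  moreover have "nat a \<in> set (rev [0..<length lam])" using e(2) by (auto simp: boxes_def)
  ultimately show "e \<in> set (reading_word lam mu T)"
    unfolding reading_word_def using e a0 b0 by (force simp: set_concat)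
qed

lemma sorted_rows:
  assumes "sorted_wrt (>) rs"
  shows "sorted_wrt (\<lambda>u v. rdlt (snd u) (snd v)) (concat (map (\<lambda>r. map (\<lambda>c. (T (int r, int c), (int r, int c))) (filter (\<lambda>c. even (T (int r, int c))) [a r..<b r])) rs))"
  using assms
proof (induction rs)
  case Nil then show ?case by simp
next
  case (Cons r rs)
  have s1: "sorted_wrt (\<lambda>u v. rdlt (snd u) (snd v)) (map (\<lambda>c. (T (int r, int c), (int r, int c))) (filter (\<lambda>c. even (T (int r, int c))) [a r..<b r]))"
    unfolding sorted_wrt_map by (rule sorted_wrt_filter) (rule sorted_wrt_mono_rel[OF _ sorted_wrt_upt], auto simp: rdlt_def)
  show ?case using Cons s1 by (auto simp: sorted_wrt_append rdlt_def)
qed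

lemma sorted_reading_word:
  "sorted_wrt (\<lambda>u v. rdlt (snd u) (snd v)) (reading_word lam mu T)"
  unfolding reading_word_def
  by (rule sorted_rows) (simp add: sorted_wrt_rev)



definition brinv :: "nat \<Rightarrow> nat \<Rightarrow> nat list \<Rightarrow> (nat \<times> nat) set \<Rightarrow> bool" where
  "brinv a b w B \<longleftrightarrow> (\<forall>p q. (p,q) \<in> B \<longrightarrow> p < q \<and> q < length w \<and> w!p = b \<and> w!q = a
      \<and> (\<forall>m. p < m \<and> m < q \<longrightarrow> \<not> unbr B m) \<and> (\<forall>p'. (p',q) \<in> B \<longrightarrow> p' = p))"

lemma unbr_insert: "unbr (insert e B) m \<Longrightarrow> unbr B m"
  by (auto simp: unbr_def)

lemma bracketing_inv: "bracketing a b w B \<Longrightarrow> brinv a b w B"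
proof (induction rule: bracketing.induct)
  case empty then show ?case by (simp add: brinv_def)
next
  case (step B p q)
  show ?case unfolding brinv_def
  proof (intro allI impI)
    fix p1 q1 assume h: "(p1, q1) \<in> insert (p, q) B"
    show "p1 < q1 \<and> q1 < length w \<and> w ! p1 = b \<and> w ! q1 = a \<and>
          (\<forall>m. p1 < m \<and> m < q1 \<longrightarrow> \<not> unbr (insert (p, q) B) m) \<and>
          (\<forall>p'. (p', q1) \<in> insert (p, q) B \<longrightarrow> p' = p1)"
    proof (cases "(p1,q1) = (p,q)")
      case True
      have "p' = p" if "(p', q) \<in> insert (p, q) B" for p'
      proof (rule ccontr)
        assume "p' \<noteq> p"
        then have "(p',q) \<in> B" using that by auto
        then have "q \<in> snd ` B" by force
        then show False using step.hyps(7) by (simp add: unbr_def)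
      qed
      moreover have "\<not> unbr (insert (p, q) B) m" if "p < m" "m < q" for m
        using step.hyps(8) that unbr_insert by blast
      ultimately show ?thesis using step.hyps True by auto
    next
      case False
      then have B1: "(p1,q1) \<in> B" using h by auto
      have I: "p1 < q1 \<and> q1 < length w \<and> w ! p1 = b \<and> w ! q1 = a \<and>
          (\<forall>m. p1 < m \<and> m < q1 \<longrightarrow> \<not> unbr B m) \<and> (\<forall>p'. (p', q1) \<in> B \<longrightarrow> p' = p1)"
        using step.IH B1 unfolding brinv_def by blast
      have "p' = p1" if "(p', q1) \<in> insert (p, q) B" for p'
      proof (cases "(p',q1) = (p,q)")
        case True
        then have "q \<in> snd ` B" using B1 by force
        then show ?thesis using step.hyps(7) by (simp add: unbr_def)
      next
        case False then show ?thesis using that I by auto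
      qed
      then show ?thesis using I unbr_insert by blast
    qed
  qed
qed

definition rdle :: "int \<times> int \<Rightarrow> int \<times> int \<Rightarrow> bool" where
  "rdle p q \<longleftrightarrow> p = q \<or> rdlt p q"

locale ctx3 =
  fixes k i n :: nat and lam mu :: "nat list" and T :: "int \<times> int \<Rightarrow> nat" and B :: "(nat \<times> nat) set"
  assumes tab: "primed_tableau k lam mu T"
    and brk: "bracketing (unprimed i) (unprimed (i + 1)) (map fst (ij_subword i lam mu T)) B"
    and compl: "bracketing_complete (unprimed i) (unprimed (i + 1)) (map fst (ij_subword i lam mu T)) B"
    and n_lt: "n < length (ij_subword i lam mu T)"
    and n_i: "fst (ij_subword i lam mu T ! n) = unprimed i"
    and n_unbr: "unbr B n"
begin

abbreviation "BX \<equiv> boxes lam mu"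
abbreviation "L \<equiv> ij_subword i lam mu T"
abbreviation "w \<equiv> map fst L"
definition "x = snd (L ! n)"

lemma L_sorted: "sorted_wrt (\<lambda>u v. rdlt (snd u) (snd v)) L"
  unfolding ij_subword_def by (rule sorted_wrt_filter) (rule sorted_reading_word)

lemma L_set: "set L = {(T q, q) | q. q \<in> BX \<and> (T q = 2*i \<or> T q = 2*i+2)}"
  unfolding ij_subword_def by (auto simp: set_reading_word unprimed_def)

lemma L_less: "m < length L \<Longrightarrow> m' < length L \<Longrightarrow> rdlt (snd (L!m)) (snd (L!m')) \<longleftrightarrow> m < m'"
  using sorted_wrt_nth_less[OF L_sorted, of m m'] sorted_wrt_nth_less[OF L_sorted, of m' m] rdlt_asym rdlt_irrefl
  by (metis linorder_neqE_nat)

lemma L_elem: "m < length L \<Longrightarrow> \<exists>q. L!m = (T q, q) \<and> q \<in> BX \<and> (T q = 2*i \<or> T q = 2*i+2)"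
  using nth_mem[of m L] L_set by auto

lemma x_box: "x \<in> BX" and x_T: "T x = 2*i"
  using L_elem[OF n_lt] n_i by (auto simp: x_def unprimed_def)

lemma idx_count:
  assumes up: "\<And>m m'. Q m \<Longrightarrow> m \<le> m' \<Longrightarrow> Q m'"
  shows "card {m. Q m \<and> m < n \<and> w!m = 2*i+2} \<le> card {m. Q m \<and> m < n \<and> w!m = 2*i}"
proof -
  have inv: "brinv (2*i) (2*i+2) w B" using bracketing_inv[OF brk] by (simp add: unprimed_def)
  let ?A = "{m. Q m \<and> m < n \<and> w!m = 2*i+2}"
  let ?C = "{m. Q m \<and> m < n \<and> w!m = 2*i}"
  have ex: "\<exists>q. (m,q) \<in> B \<and> q \<in> ?C" if "m \<in> ?A" for m
  proof -
    from that have m: "Q m" "m < n" "w!m = 2*i+2" by auto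
    have wn: "w!n = 2*i" using n_lt n_i by (simp add: unprimed_def)
    have "\<not> unbr B m" using compl m wn n_unbr n_lt unfolding bracketing_complete_def by (auto simp: unprimed_def)
    then consider "m \<in> fst ` B" | "m \<in> snd ` B" by (auto simp: unbr_def)
    then show ?thesis
    proof cases
      case 2
      then obtain p where "(p,m) \<in> B" by force
      then have "w!m = 2*i" using inv unfolding brinv_def by blast
      then show ?thesis using m by simp
    next
      case 1
      then obtain q where pq: "(m,q) \<in> B" by force
      have I: "m < q" "q < length w" "w!q = 2*i" "\<forall>m'. m < m' \<and> m' < q \<longrightarrow> \<not> unbr B m'"
        using inv pq unfolding brinv_def by blast+
      have "q \<noteq> n" using pq n_unbr by (force simp: unbr_def)
      moreover have "\<not> n < q" using I(4) m(2) n_unbr by blast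
      ultimately have "q < n" by simp
      then show ?thesis using pq I up[OF m(1), of q] by auto
    qed
  qed
  define f where "f m = (SOME q. (m,q) \<in> B \<and> q \<in> ?C)" for m
  have f: "(m, f m) \<in> B \<and> f m \<in> ?C" if "m \<in> ?A" for m
    using someI_ex[OF ex[OF that]] by (simp add: f_def)
  have "inj_on f ?A"
  proof (rule inj_onI)
    fix m m' assume "m \<in> ?A" "m' \<in> ?A" "f m = f m'"
    then show "m = m'" using f inv unfolding brinv_def by metis
  qed
  moreover have "f ` ?A \<subseteq> ?C" using f by blast
  moreover have "finite ?C" by (rule finite_subset[of _ "{..<n}"]) auto
  ultimately show ?thesis by (rule card_inj_on_le)
qed

definition "U p = {q \<in> BX. rdle p q \<and> rdlt q x}"

lemma finU: "finite (U p)" unfolding U_def using finite_boxes by simp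

lemma lemA: "card {q \<in> U p. T q = 2*i+2} \<le> card {q \<in> U p. T q = 2*i}"
proof -
  define Q where "Q m \<longleftrightarrow> (m < length L \<longrightarrow> rdle p (snd (L!m)))" for m
  have up: "Q m'" if "Q m" "m \<le> m'" for m m'
  proof (cases "m' < length L")
    case True
    then have "rdle p (snd (L!m))" using that unfolding Q_def by simp
    moreover have "m = m' \<or> rdlt (snd (L!m)) (snd (L!m'))" using L_less[of m m'] True that(2) by auto
    ultimately show ?thesis unfolding Q_def rdle_def using rdlt_trans by blast
  qed (simp add: Q_def)
  have eq: "{q \<in> U p. T q = v} = (\<lambda>m. snd (L!m)) ` {m. Q m \<and> m < n \<and> w!m = v}"
    if v: "v = 2*i \<or> v = 2*i+2" for v
  proof (intro set_eqI iffI)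
    fix q assume q: "q \<in> {q \<in> U p. T q = v}"
    then have "(T q, q) \<in> set L" unfolding L_set using v by (cases q) (auto simp: U_def)
    then obtain m where m: "m < length L" "L!m = (T q, q)" by (auto simp: in_set_conv_nth)
    have "rdlt (snd (L!m)) (snd (L!n))" using q m by (simp add: U_def x_def)
    then have "m < n" using L_less[OF m(1) n_lt] by simp
    show "q \<in> (\<lambda>m. snd (L!m)) ` {m. Q m \<and> m < n \<and> w!m = v}"
    proof (rule image_eqI)
      show "q = snd (L!m)" using m by simp
      show "m \<in> {m. Q m \<and> m < n \<and> w!m = v}" using q m \<open>m < n\<close> by (auto simp: U_def Q_def)
    qed
  next
    fix q assume "q \<in> (\<lambda>m. snd (L!m)) ` {m. Q m \<and> m < n \<and> w!m = v}"
    then obtain m where m: "q = snd (L!m)" "Q m" "m < n" "w!m = v" by auto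
    have ml: "m < length L" using m n_lt by simp
    obtain q' where q': "L!m = (T q', q')" "q' \<in> BX" using L_elem[OF ml] by auto
    have "rdlt (snd (L!m)) (snd (L!n))" using L_less[OF ml n_lt] m by simp
    then show "q \<in> {q \<in> U p. T q = v}" using m q' ml by (auto simp: U_def Q_def x_def)
  qed
  have inj: "inj_on (\<lambda>m. snd (L!m)) {m. Q m \<and> m < n \<and> w!m = v}" for v
  proof (rule inj_onI)
    fix m m' assume "m \<in> {m. Q m \<and> m < n \<and> w!m = v}" "m' \<in> {m. Q m \<and> m < n \<and> w!m = v}"
      "snd (L!m) = snd (L!m')"
    then show "m = m'" using L_less[of m m'] L_less[of m' m] n_lt rdlt_irrefl
      by (metis linorder_neqE_nat mem_Collect_eq order.strict_trans)
  qed
  show ?thesis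
    using idx_count[of Q, OF up] eq[of "2*i"] eq[of "2*i+2"] card_image[OF inj] by simp
qed

end



context ctx3 begin

lemma rowmono: "(a,b) \<in> BX \<Longrightarrow> (a,b') \<in> BX \<Longrightarrow> b \<le> b' \<Longrightarrow> T (a,b) \<le> T (a,b')"
  using tab unfolding primed_tableau_def by blast
lemma colmono: "(a,b) \<in> BX \<Longrightarrow> (a',b) \<in> BX \<Longrightarrow> a \<le> a' \<Longrightarrow> T (a,b) \<le> T (a',b)"
  using tab unfolding primed_tableau_def by blast
lemma oddrow: "(a,b) \<in> BX \<Longrightarrow> (a,b') \<in> BX \<Longrightarrow> odd (T (a,b)) \<Longrightarrow> T (a,b) = T (a,b') \<Longrightarrow> b = b'"
  using tab unfolding primed_tableau_def by blast
lemma evencol: "(a,b) \<in> BX \<Longrightarrow> (a',b) \<in> BX \<Longrightarrow> even (T (a,b)) \<Longrightarrow> T (a,b) = T (a',b) \<Longrightarrow> a = a'"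
  using tab unfolding primed_tableau_def by blast

lemma box_between:
  assumes h: "(a,d1) \<in> BX" "(a+1,d2) \<in> BX" "d1 \<le> d" "d \<le> d2"
  shows "(a,d) \<in> BX \<and> (a+1,d) \<in> BX"
proof -
  have sk: "skew_shape lam mu" using tab by (simp add: primed_tableau_def)
  have a0: "a \<ge> 0" using h(1) by (simp add: boxes_def)
  have na: "nat (a+1) = Suc (nat a)" using a0 by simp
  have lr: "Suc (nat a) < length lam" using h(2) na by (simp add: boxes_def)
  have lm: "lam ! Suc (nat a) \<le> lam ! nat a"
    using sorted_wrt_nth_less[of "(\<ge>)" lam "nat a" "Suc (nat a)"] sk lr
    by (simp add: skew_shape_def is_partition_def)
  have pm: "part mu (Suc (nat a)) \<le> part mu (nat a)"
  proof (cases "Suc (nat a) < length mu")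
    case True then show ?thesis
      using sorted_wrt_nth_less[of "(\<ge>)" mu "nat a" "Suc (nat a)"] sk
      by (simp add: skew_shape_def is_partition_def part_def)
  next
    case False then show ?thesis by (simp add: part_def)
  qed
  show ?thesis using h a0 na lm pm lr by (auto simp: boxes_def)
qed

lemma entry_enat: "entry lam mu T p = enat v \<longleftrightarrow> p \<in> BX \<and> T p = v"
  by (auto simp: entry_def)
lemma entry_box: "p \<in> BX \<Longrightarrow> entry lam mu T p = enat (T p)"
  by (auto simp: entry_def)
lemma entry_nobox: "p \<notin> BX \<Longrightarrow> entry lam mu T p = \<infinity>"
  by (auto simp: entry_def)

lemma U_mem: "q \<in> U p \<longleftrightarrow> q \<in> BX \<and> rdle p q \<and> rdlt q x"
  by (simp add: U_def)

lemma partA: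
  assumes E: "entry lam mu T (east x) = enat (2*i+1)"
  shows "entry lam mu T (south (east x)) > enat (2*i+2)"
proof -
  obtain r c where xe: "x = (r,c)" by (cases x)
  have xb: "(r,c) \<in> BX" and xt: "T (r,c) = 2*i" using x_box x_T xe by auto
  have eb: "(r,c+1) \<in> BX" and et: "T (r,c+1) = 2*i+1" using E xe by (auto simp: entry_enat east_def)
  show ?thesis
  proof (cases "(r+1,c+1) \<in> BX")
    case False
    then show ?thesis using xe by (simp add: entry_nobox south_def east_def)
  next
    case sb: True
    show ?thesis
    proof (rule ccontr)
      assume "\<not> ?thesis"
      then have st: "T (r+1,c+1) \<le> 2*i+2" using sb xe by (simp add: entry_box south_def east_def)
      define S where "S = {d. (r,d) \<in> BX \<and> d \<le> c \<and> T (r,d) = 2*i}"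
      have finS: "finite S"
      proof (rule finite_subset[of _ "snd ` BX"])
        show "S \<subseteq> snd ` BX" unfolding S_def by (auto intro: image_eqI[where x="(r, _)"])
        show "finite (snd ` BX)" using finite_boxes by simp
      qed
      have cS: "c \<in> S" using xb xt by (simp add: S_def)
      define Lc where "Lc = Min S"
      have LS: "Lc \<in> S" unfolding Lc_def using Min_in[OF finS] cS by blast
      have Lmin: "d \<in> S \<Longrightarrow> Lc \<le> d" for d using finS by (simp add: Lc_def)
      have Lc: "(r,Lc) \<in> BX" "Lc \<le> c" "T (r,Lc) = 2*i" using LS by (auto simp: S_def)
      have row1: "(r+1,d) \<in> BX" if "Lc \<le> d" "d \<le> c+1" for d
        using box_between[OF Lc(1) sb that] by simp
      have row0: "(r,d) \<in> BX" if "Lc \<le> d" "d \<le> c+1" for d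
        using box_between[OF Lc(1) sb that] by simp
      have tL: "T (r+1,Lc) \<ge> 2*i+1"
      proof -
        have "T (r,Lc) \<le> T (r+1,Lc)" using colmono[OF Lc(1) row1[of Lc]] Lc by simp
        moreover have "T (r,Lc) \<noteq> T (r+1,Lc)" using evencol[OF Lc(1) row1[of Lc]] Lc by force
        ultimately show ?thesis using Lc(3) by simp
      qed
      have r1ge: "T q \<ge> 2*i+1" if "q \<in> BX" "fst q = r+1" "snd q \<ge> Lc" for q
        using rowmono[of "r+1" Lc "snd q"] row1[of Lc] Lc that tL by (cases q) force
      let ?I = "{q \<in> U (r+1,Lc). T q = 2*i}"
      let ?J = "{q \<in> U (r+1,Lc). T q = 2*i+2}"
      have "?I \<subseteq> (\<lambda>d. (r,d)) ` {Lc..<c}"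
      proof
        fix q assume q: "q \<in> ?I"
        obtain a b where qe: "q = (a,b)" by (cases q)
        have qq: "(a,b) \<in> BX" "rdle (r+1,Lc) (a,b)" "rdlt (a,b) (r,c)" "T (a,b) = 2*i"
          using q qe xe by (auto simp: U_mem)
        have "a = r \<or> (a = r+1 \<and> b \<ge> Lc)" using qq(2,3) by (auto simp: rdle_def rdlt_def)
        moreover have "\<not> (a = r+1 \<and> b \<ge> Lc)" using r1ge[of "(a,b)"] qq by auto
        ultimately have ar: "a = r" by blast
        then have "b < c" using qq(3) by (simp add: rdlt_def)
        moreover have "b \<in> S" using qq ar \<open>b < c\<close> by (simp add: S_def)
        ultimately show "q \<in> (\<lambda>d. (r,d)) ` {Lc..<c}" using Lmin qe ar by auto
      qed
      then have cI: "card ?I \<le> nat (c - Lc)"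
        using card_mono[of "(\<lambda>d. (r,d)) ` {Lc..<c}" ?I] card_image_le[of "{Lc..<c}" "\<lambda>d. (r,d)"] by simp
      define D2 where "D2 = {d \<in> {Lc..c+1}. T (r+1,d) = 2*i+2}"
      define D1 where "D1 = {d \<in> {Lc..c+1}. T (r+1,d) = 2*i+1}"
      have vals: "T (r+1,d) = 2*i+1 \<or> T (r+1,d) = 2*i+2" if "d \<in> {Lc..c+1}" for d
      proof -
        have "T (r+1,d) \<ge> 2*i+1" using r1ge[of "(r+1,d)"] row1 that by auto
        moreover have "T (r+1,d) \<le> T (r+1,c+1)" using rowmono[OF row1 sb] that by auto
        ultimately show ?thesis using st by linarith
      qed
      have "{Lc..c+1} = D1 \<union> D2" using vals unfolding D1_def D2_def by blast
      then have "card {Lc..c+1} \<le> card D1 + card D2" by (metis card_Un_le)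
      moreover have "card D1 \<le> Suc 0"
      proof (subst card_le_Suc0_iff_eq)
        show "finite D1" unfolding D1_def by (rule finite_subset[of _ "{Lc..c+1}"]) auto
        show "\<forall>a1\<in>D1. \<forall>a2\<in>D1. a1 = a2"
        proof (intro ballI)
          fix a1 a2 assume "a1 \<in> D1" "a2 \<in> D1"
          then have h: "(r+1,a1) \<in> BX" "(r+1,a2) \<in> BX" "T (r+1,a1) = 2*i+1" "T (r+1,a2) = 2*i+1"
            using row1 unfolding D1_def by auto
          show "a1 = a2" by (rule oddrow[OF h(1,2)]) (use h in auto)
        qed
      qed
      moreover have "card D2 \<le> card ?J"
      proof -
        have "(\<lambda>d. (r+1,d)) ` D2 \<subseteq> ?J"
          using row1 xe by (auto simp: D2_def U_mem rdle_def rdlt_def)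
        moreover have "inj_on (\<lambda>d. (r+1,d)) D2" by (simp add: inj_on_def)
        ultimately show ?thesis using card_mono[OF _ \<open>(\<lambda>d. (r+1,d)) ` D2 \<subseteq> ?J\<close>] card_image finU by fastforce
      qed
      moreover have "card ?J \<le> card ?I" using lemA by simp
      moreover have "card {Lc..c+1} = nat (c + 2 - Lc)" by simp
      ultimately show False using cI Lc(2) by linarith
    qed
  qed
qed

end


context ctx3 begin

definition "Nn p = card {q \<in> BX. fst q = fst p - 1 \<and> snd q < snd p \<and> T q = 2*i}"
definition "ci p = card {q \<in> U p. T q = 2*i}"
definition "cj p = card {q \<in> U p. T q = 2*i+2}"
definition "Jinv p \<longleftrightarrow> int (ci p) - int (cj p) \<le> int (Nn p) - (if T p = 2*i+2 then 1 else 0)"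

lemma finB: "finite {q \<in> BX. P q}" using finite_boxes by simp
lemma finUP: "finite {q \<in> U p. P q}" using finU by simp

lemma U_mono: "rdlt p' p \<Longrightarrow> U p \<subseteq> U p'"
  unfolding U_def rdle_def using rdlt_trans by blast

lemma cj_step:
  assumes "rdlt p' p" "p' \<in> BX" "rdlt p' x"
  shows "int (cj p') \<ge> int (cj p) + (if T p' = 2*i+2 then 1 else 0)"
proof -
  have sub: "{q \<in> U p. T q = 2*i+2} \<subseteq> {q \<in> U p'. T q = 2*i+2}" using U_mono[OF assms(1)] by blast
  have nin: "p' \<notin> U p" unfolding U_mem rdle_def using assms(1) rdlt_asym[of p' p] rdlt_irrefl[of p'] by blast
  have inU: "p' \<in> U p'" using assms by (simp add: U_mem rdle_def)
  show ?thesis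
  proof (cases "T p' = 2*i+2")
    case True
    have "insert p' {q \<in> U p. T q = 2*i+2} \<subseteq> {q \<in> U p'. T q = 2*i+2}" using sub inU True by blast
    then have "card (insert p' {q \<in> U p. T q = 2*i+2}) \<le> cj p'" unfolding cj_def by (rule card_mono[OF finUP])
    then show ?thesis using nin True by (simp add: cj_def finUP)
  next
    case False
    then show ?thesis using card_mono[OF finUP sub] by (simp add: cj_def)
  qed
qed

lemma ribbon_main:
  assumes R: "max_ribbon lam mu T (i+1) (south x) ps"
  shows "\<forall>m < length ps. fst (ps!m) \<ge> fst x + 1 \<and> Jinv (ps!m)"
proof -
  have ne: "ps \<noteq> []" and hd: "hd ps = south x" using R by (auto simp: max_ribbon_def)
  have RB: "ps!m \<in> BX \<and> (T (ps!m) = 2*i+1 \<or> T (ps!m) = 2*i+2)" if "m < length ps" for m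
  proof -
    have "entry lam mu T (ps!m) \<in> {enat (primed (i+1)), enat (unprimed (i+1))}"
      using R that nth_mem[OF that] unfolding max_ribbon_def by blast
    then show ?thesis by (auto simp: entry_enat primed_def unprimed_def)
  qed
  have ST: "ps!Suc m = south (ps!m) \<or> ps!Suc m = west (ps!m)" if "Suc m < length ps" for m
    using R that unfolding max_ribbon_def by blast
  obtain r c where xe: "x = (r,c)" by (cases x)
  show ?thesis
  proof (intro allI impI)
    fix m assume "m < length ps"
    then show "fst (ps!m) \<ge> fst x + 1 \<and> Jinv (ps!m)"
    proof (induction m)
      case 0
      have p0: "ps!0 = (r+1,c)" using ne hd xe by (simp add: hd_conv_nth south_def)
      have b0: "(r+1,c) \<in> BX" "T (r+1,c) \<ge> 2*i+1" using RB[OF 0] p0 by auto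
      have "{q \<in> U (r+1,c). T q = 2*i} \<subseteq> {q \<in> BX. fst q = fst (r+1,c) - 1 \<and> snd q < snd (r+1,c) \<and> T q = 2*i}"
      proof
        fix q assume q: "q \<in> {q \<in> U (r+1,c). T q = 2*i}"
        obtain a b where qe: "q = (a,b)" by (cases q)
        have qq: "(a,b) \<in> BX" "rdle (r+1,c) (a,b)" "rdlt (a,b) (r,c)" "T (a,b) = 2*i"
          using q qe xe by (auto simp: U_mem)
        have "(a = r \<and> b < c) \<or> (a = r+1 \<and> b \<ge> c)" using qq(2,3) by (auto simp: rdle_def rdlt_def)
        moreover have "\<not> (a = r+1 \<and> b \<ge> c)" using rowmono[of "r+1" c b] b0 qq by auto
        ultimately show "q \<in> {q \<in> BX. fst q = fst (r+1,c) - 1 \<and> snd q < snd (r+1,c) \<and> T q = 2*i}"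
          using qq qe by auto
      qed
      then have "ci (r+1,c) \<le> Nn (r+1,c)" unfolding ci_def Nn_def by (rule card_mono[OF finB])
      moreover have "int (cj (r+1,c)) \<ge> int (cj (r,c)) + (if T (r+1,c) = 2*i+2 then 1 else 0)"
        by (rule cj_step) (use b0 xe in \<open>auto simp: rdlt_def\<close>)
      ultimately show ?case using p0 xe by (simp add: Jinv_def)
    next
      case (Suc m)
      then have IH: "fst (ps!m) \<ge> fst x + 1" "Jinv (ps!m)" by auto
      obtain a b where pe: "ps!m = (a,b)" by (cases "ps!m")
      have pb: "(a,b) \<in> BX" "T (a,b) = 2*i+1 \<or> T (a,b) = 2*i+2" using RB[of m] Suc pe by auto
      have p'b: "ps!Suc m \<in> BX" "T (ps!Suc m) = 2*i+1 \<or> T (ps!Suc m) = 2*i+2" using RB Suc by auto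
      have ar: "a \<ge> r+1" using IH pe xe by simp
      from ST[OF Suc.prems] show ?case
      proof
        assume s: "ps!Suc m = south (ps!m)"
        then have p'e: "ps!Suc m = (a+1,b)" using pe by (simp add: south_def)
        have b1: "(a+1,b) \<in> BX" using p'b p'e by simp
        have tp: "T (a,b) = 2*i+1"
        proof (rule ccontr)
          assume "T (a,b) \<noteq> 2*i+1"
          then have t2: "T (a,b) = 2*i+2" using pb by auto
          have "T (a,b) \<le> T (a+1,b)" using colmono[OF pb(1) b1] by simp
          then have "T (a+1,b) = 2*i+2" using p'b p'e t2 by auto
          then show False using evencol[OF pb(1) b1] t2 by simp
        qed
        have N0: "Nn (a,b) = 0"
        proof -
          have "{q \<in> BX. fst q = fst (a,b) - 1 \<and> snd q < snd (a,b) \<and> T q = 2*i} = {}"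
          proof (rule ccontr)
            assume "\<not> ?thesis"
            then obtain q where "q \<in> BX" "fst q = a - 1" "snd q < b" "T q = 2*i" by auto
            then obtain d where d: "(a-1,d) \<in> BX" "d < b" "T (a-1,d) = 2*i" by (cases q) auto
            have bb: "(a-1+1,d) \<in> BX" using box_between[of "a-1" d b d] d pb by simp
            then have bb': "(a,d) \<in> BX" by simp
            have "T (a-1,d) \<le> T (a,d)" using colmono[OF d(1) bb'] by simp
            moreover have "T (a-1,d) \<noteq> T (a,d)" using evencol[OF d(1) bb'] d by force
            moreover have "T (a,d) \<le> T (a,b)" using rowmono[OF bb' pb(1)] d by simp
            ultimately have "T (a,d) = 2*i+1" using d tp by linarith
            then have "d = b" using oddrow[OF bb' pb(1)] tp by simp
            then show False using d by simp
          qed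
          then show ?thesis unfolding Nn_def by (metis card.empty)
        qed
        have ci': "ci (a+1,b) \<le> ci (a,b) + Nn (a+1,b)"
        proof -
          have "{q \<in> U (a+1,b). T q = 2*i} \<subseteq> {q \<in> U (a,b). T q = 2*i} \<union> {q \<in> BX. fst q = fst (a+1,b) - 1 \<and> snd q < snd (a+1,b) \<and> T q = 2*i}"
          proof
            fix q assume q: "q \<in> {q \<in> U (a+1,b). T q = 2*i}"
            obtain a' b' where qe: "q = (a',b')" by (cases q)
            have qq: "(a',b') \<in> BX" "rdle (a+1,b) (a',b')" "rdlt (a',b') x" "T (a',b') = 2*i"
              using q qe by (auto simp: U_mem)
            have "rdle (a,b) (a',b') \<or> (a' = a \<and> b' < b) \<or> (a' = a+1 \<and> b' \<ge> b)"
              using qq(2) by (auto simp: rdle_def rdlt_def)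
            moreover have "\<not> (a' = a+1 \<and> b' \<ge> b)" using rowmono[of "a+1" b b'] b1 qq p'b p'e by auto
            ultimately show "q \<in> {q \<in> U (a,b). T q = 2*i} \<union> {q \<in> BX. fst q = fst (a+1,b) - 1 \<and> snd q < snd (a+1,b) \<and> T q = 2*i}"
              using qq qe by (auto simp: U_mem)
          qed
          then have "ci (a+1,b) \<le> card ({q \<in> U (a,b). T q = 2*i} \<union> {q \<in> BX. fst q = fst (a+1,b) - 1 \<and> snd q < snd (a+1,b) \<and> T q = 2*i})"
            unfolding ci_def by (rule card_mono[OF finite_UnI[OF finUP finB]])
          also have "\<dots> \<le> ci (a,b) + Nn (a+1,b)" unfolding ci_def Nn_def by (rule card_Un_le)
          finally show ?thesis .
        qed
        have cj': "int (cj (a+1,b)) \<ge> int (cj (a,b)) + (if T (a+1,b) = 2*i+2 then 1 else 0)"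
          by (rule cj_step) (use b1 xe ar in \<open>auto simp: rdlt_def\<close>)
        have J: "int (ci (a,b)) - int (cj (a,b)) \<le> 0" using IH(2) pe N0 tp by (simp add: Jinv_def)
        show ?thesis using p'e ci' cj' J IH(1) pe unfolding Jinv_def by auto
      next
        assume s: "ps!Suc m = west (ps!m)"
        then have p'e: "ps!Suc m = (a,b-1)" using pe by (simp add: west_def)
        have b1: "(a,b-1) \<in> BX" using p'b p'e by simp
        have tp: "T (a,b) = 2*i+2"
        proof (rule ccontr)
          assume "T (a,b) \<noteq> 2*i+2"
          then have t1: "T (a,b) = 2*i+1" using pb by auto
          have "T (a,b-1) \<le> T (a,b)" using rowmono[OF b1 pb(1)] by simp
          then have "T (a,b-1) = 2*i+1" using p'b p'e t1 by auto
          then show False using oddrow[OF pb(1) b1] t1 by simp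
        qed
        have t1': "T (a,b-1) \<noteq> 2*i" using p'b p'e by auto
        have ci': "ci (a,b-1) \<le> ci (a,b)"
        proof -
          have "{q \<in> U (a,b-1). T q = 2*i} \<subseteq> {q \<in> U (a,b). T q = 2*i}"
          proof
            fix q assume q: "q \<in> {q \<in> U (a,b-1). T q = 2*i}"
            then have "q \<noteq> (a,b-1)" using t1' by auto
            then have "rdle (a,b) q" using q by (cases q) (auto simp: U_mem rdle_def rdlt_def)
            then show "q \<in> {q \<in> U (a,b). T q = 2*i}" using q by (auto simp: U_mem)
          qed
          then show ?thesis unfolding ci_def by (rule card_mono[OF finUP])
        qed
        have cj': "int (cj (a,b-1)) \<ge> int (cj (a,b)) + (if T (a,b-1) = 2*i+2 then 1 else 0)"
          by (rule cj_step) (use b1 xe ar in \<open>auto simp: rdlt_def\<close>)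
        have Nn': "Nn (a,b) \<le> Nn (a,b-1) + 1"
        proof -
          have "{q \<in> BX. fst q = fst (a,b) - 1 \<and> snd q < snd (a,b) \<and> T q = 2*i} \<subseteq>
                insert (a-1,b-1) {q \<in> BX. fst q = fst (a,b-1) - 1 \<and> snd q < snd (a,b-1) \<and> T q = 2*i}"
            by auto
          then have "Nn (a,b) \<le> card (insert (a-1,b-1) {q \<in> BX. fst q = fst (a,b-1) - 1 \<and> snd q < snd (a,b-1) \<and> T q = 2*i})"
            unfolding Nn_def by (rule card_mono[OF finite.insertI[OF finB]])
          also have "\<dots> \<le> Nn (a,b-1) + 1" unfolding Nn_def using card_insert_le_m1 finB
            by (simp add: card_insert_if finB)
          finally show ?thesis .
        qed
        have J: "int (ci (a,b)) - int (cj (a,b)) \<le> int (Nn (a,b)) - 1" using IH(2) pe tp by (simp add: Jinv_def)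
        show ?thesis using p'e ci' cj' J Nn' IH(1) pe unfolding Jinv_def by auto
      qed
    qed
  qed
qed

end


context ctx3 begin

lemma partB:
  assumes R: "max_ribbon lam mu T (i+1) (south x) ps"
  shows "(\<forall>p \<in> set ps. entry lam mu T p = enat (2*i+2) \<longrightarrow> entry lam mu T (northwest p) = enat (2*i))
         \<and> entry lam mu T (last ps) = enat (2*i+1)"
proof -
  have main: "\<forall>m < length ps. fst (ps!m) \<ge> fst x + 1 \<and> Jinv (ps!m)" by (rule ribbon_main[OF R])
  have NW: "T (a-1,b-1) = 2*i \<and> (a-1,b-1) \<in> BX \<and> (a,b-1) \<in> BX"
    if asm: "(a,b) \<in> set ps" "entry lam mu T (a,b) = enat (2*i+2)" for a b
  proof -
    obtain m where m: "m < length ps" "ps!m = (a,b)" using asm(1) unfolding in_set_conv_nth by auto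
    have pb: "(a,b) \<in> BX" "T (a,b) = 2*i+2" using asm(2) by (auto simp: entry_enat)
    have J: "Jinv (a,b)" using main m by auto
    have "cj (a,b) \<le> ci (a,b)" using lemA[of "(a,b)"] by (simp add: ci_def cj_def)
    then have "Nn (a,b) \<noteq> 0" using J pb by (simp add: Jinv_def)
    then have "{q \<in> BX. fst q = fst (a,b) - 1 \<and> snd q < snd (a,b) \<and> T q = 2*i} \<noteq> {}"
      unfolding Nn_def by (metis card.empty)
    then obtain q where q: "q \<in> BX" "fst q = a - 1" "snd q < b" "T q = 2*i" by auto
    obtain d where qe: "q = (a-1,d)" using q(2) by (cases q) auto
    have d: "(a-1,d) \<in> BX" "d < b" "T (a-1,d) = 2*i" using q qe by auto
    have pb': "(a-1+1,b) \<in> BX" using pb by simp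
    have bb1': "(a-1,b-1) \<in> BX \<and> (a-1+1,b-1) \<in> BX" by (rule box_between[OF d(1) pb']) (use d in auto)
    have bb1: "(a-1,b-1) \<in> BX" "(a,b-1) \<in> BX" using bb1' by simp_all
    have bb2': "(a-1,b) \<in> BX \<and> (a-1+1,b) \<in> BX" by (rule box_between[OF d(1) pb']) (use d in auto)
    have bb2: "(a-1,b) \<in> BX" using bb2' by simp
    have t1: "T (a-1,b-1) \<ge> 2*i" using rowmono[OF d(1) bb1(1)] d by simp
    have "T (a-1,b) \<le> T (a,b)" using colmono[OF bb2 pb(1)] by simp
    moreover have "T (a-1,b) \<noteq> T (a,b)"
    proof
      assume "T (a-1,b) = T (a,b)"
      moreover have ev: "even (T (a-1,b))" using pb \<open>T (a-1,b) = T (a,b)\<close> by simp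
      ultimately have "a-1 = a" using evencol[OF bb2 pb(1) ev] by simp
      then show False by simp
    qed
    ultimately have t2: "T (a-1,b) \<le> 2*i+1" using pb by simp
    have t3: "T (a-1,b-1) \<le> T (a-1,b)" using rowmono[OF bb1(1) bb2] by simp
    have "T (a-1,b-1) \<noteq> 2*i+1"
    proof
      assume h: "T (a-1,b-1) = 2*i+1"
      then have "T (a-1,b) = 2*i+1" using t2 t3 by simp
      then show False using oddrow[OF bb1(1) bb2] h by simp
    qed
    then show ?thesis using t1 t2 t3 bb1 by simp
  qed
  have A: "\<forall>p \<in> set ps. entry lam mu T p = enat (2*i+2) \<longrightarrow> entry lam mu T (northwest p) = enat (2*i)"
  proof (intro ballI impI)
    fix p assume h: "p \<in> set ps" "entry lam mu T p = enat (2*i+2)"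
    obtain a b where pe: "p = (a,b)" by (cases p)
    have "T (a-1,b-1) = 2*i" "(a-1,b-1) \<in> BX" using NW[of a b] h pe by auto
    then show "entry lam mu T (northwest p) = enat (2*i)" using pe by (simp add: northwest_def entry_box)
  qed
  have ne: "ps \<noteq> []" using R by (simp add: max_ribbon_def)
  obtain a b where le: "last ps = (a,b)" by (cases "last ps")
  have lin: "(a,b) \<in> set ps" using last_in_set[OF ne] le by simp
  have ent: "entry lam mu T (a,b) \<in> {enat (2*i+1), enat (2*i+2)}"
  proof -
    have "\<forall>p\<in>set ps. entry lam mu T p \<in> {enat (primed (i+1)), enat (unprimed (i+1))}"
      using R unfolding max_ribbon_def by blast
    then show ?thesis using lin by (simp add: primed_def unprimed_def)
  qed
  have wst: "entry lam mu T (west (a,b)) \<notin> {enat (2*i+1), enat (2*i+2)}"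
  proof -
    have "entry lam mu T (west (last ps)) \<notin> {enat (primed (i+1)), enat (unprimed (i+1))}"
      using R unfolding max_ribbon_def by blast
    then show ?thesis using le by (simp add: primed_def unprimed_def)
  qed
  have "entry lam mu T (a,b) \<noteq> enat (2*i+2)"
  proof
    assume h: "entry lam mu T (a,b) = enat (2*i+2)"
    have pb: "(a,b) \<in> BX" "T (a,b) = 2*i+2" using h by (auto simp: entry_enat)
    have n: "T (a-1,b-1) = 2*i" "(a-1,b-1) \<in> BX" "(a,b-1) \<in> BX" using NW[OF lin h] by auto
    have "T (a-1,b-1) \<le> T (a,b-1)" using colmono[OF n(2)] n(3) by simp
    moreover have "T (a-1,b-1) \<noteq> T (a,b-1)"
    proof
      assume "T (a-1,b-1) = T (a,b-1)"
      moreover have ev: "even (T (a-1,b-1))" using n(1) by simp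
      ultimately have "a-1 = a" using evencol[OF n(2) n(3) ev] by simp
      then show False by simp
    qed
    moreover have "T (a,b-1) \<le> T (a,b)" using rowmono[OF n(3) pb(1)] by simp
    ultimately have "T (a,b-1) = 2*i+1 \<or> T (a,b-1) = 2*i+2" using n pb by linarith
    then show False using wst n(3) by (auto simp: west_def entry_box)
  qed
  then show ?thesis using A ent le by auto
qed

end

theorem lemma3p1:
  fixes k i n :: nat and lam mu :: "nat list" and T :: "int \<times> int \<Rightarrow> nat"
    and B :: "(nat \<times> nat) set"
  assumes tab: "primed_tableau k lam mu T"
    and i_ge: "1 \<le> i" and i_le: "i \<le> k - 1"
    and brk: "bracketing (unprimed i) (unprimed (i + 1)) (map fst (ij_subword i lam mu T)) B"
    and compl: "bracketing_complete (unprimed i) (unprimed (i + 1)) (map fst (ij_subword i lam mu T)) B"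
    and n_lt: "n < length (ij_subword i lam mu T)"
    and n_i: "fst (ij_subword i lam mu T ! n) = unprimed i"
    and n_unbr: "unbr B n"
    and n_rightmost: "\<forall>m < length (ij_subword i lam mu T).
                        fst (ij_subword i lam mu T ! m) = unprimed i \<and> unbr B m \<longrightarrow> m \<le> n"
  shows "(let x = snd (ij_subword i lam mu T ! n); j = i + 1; c = entry lam mu T in
           (c (east x) = enat (primed j) \<longrightarrow> c (south (east x)) > enat (unprimed j))
         \<and> (c (east x) \<ge> enat (unprimed j) \<and> c (south x) \<in> {enat (primed j), enat (unprimed j)} \<longrightarrow>
              (\<forall>ps. max_ribbon lam mu T j (south x) ps \<longrightarrow>
                 (\<forall>p \<in> set ps. c p = enat (unprimed j) \<longrightarrow> c (northwest p) = enat (unprimed i))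
               \<and> c (last ps) = enat (primed j))))"
proof -
  interpret ctx3 k i n lam mu T B using tab brk compl n_lt n_i n_unbr by unfold_locales
  have xd: "snd (ij_subword i lam mu T ! n) = x" by (simp add: x_def)
  have pv: "primed (i+1) = 2*i+1" "unprimed (i+1) = 2*i+2" "unprimed i = 2*i"
    by (simp_all add: primed_def unprimed_def)
  show ?thesis
    unfolding Let_def xd pv using partA partB by blast
qed

end
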